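(* Let $B$ be the open unit disk, let $U=(u,v)\in C^1(\overline B;\mathbb R^2)$ be harmonic in $B$, $\Phi=U|_{\partial B}$, $\tilde u$ a harmonic conjugate of $u$ and $f=u+i\tilde u$. Assume $\det DU>0$ on $\partial B$ and that $\frac{\partial u}{\partial\theta}\big|_{\partial B}$ vanishes at only finitely many points. Then $\mathrm{WN}(f(\partial B))=\mathrm{WN}(\Phi(\partial B))$.
   Context: For a closed curve parameterized by a $C^1$ map $\theta\mapsto F(e^{i\theta})$ with $\partial F/\partial\theta\neq0$ for all $\theta$, its winding number is $\mathrm{WN}=\frac1{2\pi}\int_{\partial B}\mathrm d\,\arg\left(\frac{\partial F}{\partial\theta}\right)$. *)

theory Defs
  imports "HOL-Complex_Analysis.Complex_Analysis"
begin

text \<open>Points of the plane are complex numbers z = x + i y.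
  u is C^1 on S with (continuous) partial derivatives ux = du/dx, uy = du/dy
  (derivative taken within S, i.e. one-sided at boundary points of S).\<close>
definition has_partials_on ::
  "(complex \<Rightarrow> real) \<Rightarrow> (complex \<Rightarrow> real) \<Rightarrow> (complex \<Rightarrow> real) \<Rightarrow> complex set \<Rightarrow> bool" where
  "has_partials_on u ux uy S \<longleftrightarrow>
     (\<forall>z\<in>S. (u has_derivative (\<lambda>h. ux z * Re h + uy z * Im h)) (at z within S)) \<and>
     continuous_on S ux \<and> continuous_on S uy"

definition harmonic_on :: "(complex \<Rightarrow> real) \<Rightarrow> complex set \<Rightarrow> bool" where
  "harmonic_on u S \<longleftrightarrow> open S \<and>
     (\<exists>ux uy uxx uxy uyx uyy.
        has_partials_on u ux uy S \<and> has_partials_on ux uxx uxy S \<and> has_partials_on uy uyx uyy S \<and>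
        (\<forall>z\<in>S. uxx z + uyy z = 0))"

text \<open>Angular derivative d/d theta = x d/dy - y d/dx.\<close>
definition dtheta :: "(complex \<Rightarrow> real) \<Rightarrow> (complex \<Rightarrow> real) \<Rightarrow> complex \<Rightarrow> real" where
  "dtheta ux uy z = Re z * uy z - Im z * ux z"

definition regular_closed_curve :: "(real \<Rightarrow> complex) \<Rightarrow> bool" where
  "regular_closed_curve \<gamma> \<longleftrightarrow>
     (\<forall>\<theta>. \<gamma> (\<theta> + 2 * pi) = \<gamma> \<theta>) \<and>
     (\<forall>\<theta>. (\<gamma> has_vector_derivative vector_derivative \<gamma> (at \<theta>)) (at \<theta>)) \<and>
     continuous_on UNIV (\<lambda>\<theta>. vector_derivative \<gamma> (at \<theta>)) \<and>
     (\<forall>\<theta>. vector_derivative \<gamma> (at \<theta>) \<noteq> 0)"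

text \<open>WN = (1/2pi) \<integral> d arg (d gamma / d theta) over theta in [0, 2 pi]:
  the winding number about 0 of the tangent curve.\<close>
definition WN :: "(real \<Rightarrow> complex) \<Rightarrow> complex" where
  "WN \<gamma> = winding_number (\<lambda>t. vector_derivative \<gamma> (at (2 * pi * t))) 0"

end

theory Submission imports Defs "HOL-Real_Asymp.Real_Asymp" begin

lemma alg1: "(x::real) * uy = y * ux \<Longrightarrow> x^2+y^2=1 \<Longrightarrow> (x * ux+y * uy) * (x * vy-y * vx) = ux * vy-uy * vx"
  by algebra

lemma alg2: "(b::real) * a>0 \<Longrightarrow> 0\<le>s \<Longrightarrow> s\<le>1 \<Longrightarrow> (1-s) * b + s * a \<noteq> 0"
  by (smt (verit) mult_eq_0_iff zero_le_mult_iff)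

lemma cis_sq: "Re (cis t) ^ 2 + Im (cis t) ^ 2 = 1"
  by simp

theorem lemma3p11:
  fixes U :: "complex \<Rightarrow> complex"
    and ux uy vx vy :: "complex \<Rightarrow> real"
    and ut :: "complex \<Rightarrow> real"
  assumes C1u: "has_partials_on (\<lambda>z. Re (U z)) ux uy (cball 0 1)"
    and C1v: "has_partials_on (\<lambda>z. Im (U z)) vx vy (cball 0 1)"
    and harm_u: "harmonic_on (\<lambda>z. Re (U z)) (ball 0 1)"
    and harm_v: "harmonic_on (\<lambda>z. Im (U z)) (ball 0 1)"
    and conj: "(\<lambda>z. complex_of_real (Re (U z)) + \<i> * complex_of_real (ut z)) holomorphic_on ball 0 1"
    and det_pos: "\<forall>z. norm z = 1 \<longrightarrow> ux z * vy z - uy z * vx z > 0"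
    and fin: "finite {z. norm z = 1 \<and> dtheta ux uy z = 0}"
  shows "regular_closed_curve (\<lambda>\<theta>. U (cis \<theta>)) \<and>
         regular_closed_curve (\<lambda>\<theta>. Lim (at (cis \<theta>) within ball 0 1)
             (\<lambda>z. complex_of_real (Re (U z)) + \<i> * complex_of_real (ut z))) \<and>
         WN (\<lambda>\<theta>. Lim (at (cis \<theta>) within ball 0 1)
             (\<lambda>z. complex_of_real (Re (U z)) + \<i> * complex_of_real (ut z)))
         = WN (\<lambda>\<theta>. U (cis \<theta>))"
proof -
  define F where "F = (\<lambda>z. complex_of_real (Re (U z)) + \<i> * complex_of_real (ut z))"
  define G where "G = (\<lambda>z. complex_of_real (ux z) - \<i> * complex_of_real (uy z))"
  have du: "\<And>z. z \<in> cball 0 1 \<Longrightarrow> ((\<lambda>z. Re (U z)) has_derivative (\<lambda>h. ux z * Re h + uy z * Im h)) (at z within cball 0 1)"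
    and cux: "continuous_on (cball 0 1) ux" and cuy: "continuous_on (cball 0 1) uy"
    using C1u unfolding has_partials_on_def by auto
  have dv: "\<And>z. z \<in> cball 0 1 \<Longrightarrow> ((\<lambda>z. Im (U z)) has_derivative (\<lambda>h. vx z * Re h + vy z * Im h)) (at z within cball 0 1)"
    and cvx: "continuous_on (cball 0 1) vx" and cvy: "continuous_on (cball 0 1) vy"
    using C1v unfolding has_partials_on_def by auto
  have contG: "continuous_on (cball 0 1) G"
    unfolding G_def by (intro continuous_intros cux cuy)
  have dF: "(F has_field_derivative G z) (at z)" if z: "z \<in> ball 0 1" for z
  proof -
    have "F field_differentiable at z"
      using conj z unfolding F_def by (meson holomorphic_on_imp_differentiable_at open_ball)
    then have d1: "(F has_field_derivative deriv F z) (at z)"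
      by (simp add: field_differentiable_derivI)
    have "((\<lambda>w. Re (F w)) has_derivative (\<lambda>h. Re (deriv F z * h))) (at z)"
      using bounded_linear.has_derivative[OF bounded_linear_Re d1[unfolded has_field_derivative_def]] .
    moreover have "(\<lambda>w. Re (F w)) = (\<lambda>z. Re (U z))" unfolding F_def by auto
    moreover have "((\<lambda>z. Re (U z)) has_derivative (\<lambda>h. ux z * Re h + uy z * Im h)) (at z)"
    proof -
      have "z \<in> interior (cball 0 1)" using z by simp
      then have eqa: "at z within cball 0 1 = at z" by (rule at_within_interior)
      have zc: "z \<in> cball 0 1" using z by auto
      show ?thesis using du[OF zc, unfolded eqa] .
    qed
    ultimately have eq: "(\<lambda>h. Re (deriv F z * h)) = (\<lambda>h. ux z * Re h + uy z * Im h)"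
      using has_derivative_unique by metis
    have "Re (deriv F z) = ux z" using fun_cong[OF eq, of 1] by simp
    moreover have "- Im (deriv F z) = uy z" using fun_cong[OF eq, of \<i>] by simp
    ultimately have "deriv F z = G z" unfolding G_def by (simp add: complex_eq_iff)
    then show ?thesis using d1 by simp
  qed
  obtain M where M: "\<And>z. z \<in> cball 0 1 \<Longrightarrow> norm (G z) \<le> M" and M0: "M \<ge> 0"
  proof -
    have "compact (G ` cball 0 1)" by (intro compact_continuous_image contG compact_cball)
    then obtain B where "B > 0" "\<forall>x\<in>G ` cball 0 1. norm x \<le> B"
      using compact_imp_bounded bounded_pos by blast
    then show ?thesis using that[of B] by auto
  qed
  have lipF: "norm (F x - F y) \<le> M * norm (x - y)" if "x \<in> ball 0 1" "y \<in> ball 0 1" for x y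
  proof -
    have "\<And>z. z \<in> ball 0 1 \<Longrightarrow> (F has_field_derivative G z) (at z within ball 0 1)"
      using dF has_field_derivative_at_within by blast
    moreover have "\<And>z. z \<in> ball 0 1 \<Longrightarrow> norm (G z) \<le> M" using M by auto
    ultimately show ?thesis using field_differentiable_bound[OF convex_ball, of 0 1 F G M, OF _ _ that] by blast
  qed
  have ucF: "uniformly_continuous_on (ball 0 1) F"
    unfolding uniformly_continuous_on_def
  proof (intro allI impI)
    fix e :: real assume e: "e > 0"
    show "\<exists>d>0. \<forall>x\<in>ball (0::complex) 1. \<forall>x'\<in>ball 0 1. dist x' x < d \<longrightarrow> dist (F x') (F x) < e"
    proof (intro exI[of _ "e / (M + 1)"] conjI ballI impI)
      show "e / (M+1) > 0" using e M0 by simp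
      fix x x' :: complex assume xx: "x \<in> ball 0 1" "x' \<in> ball 0 1" "dist x' x < e / (M+1)"
      have "dist (F x') (F x) \<le> M * dist x' x" using lipF[OF xx(2,1)] by (simp add: dist_norm)
      also have "\<dots> \<le> (M+1) * dist x' x" by (simp add: mult_right_mono)
      also have "\<dots> < e" using xx(3) M0 by (simp add: field_simps)
      finally show "dist (F x') (F x) < e" .
    qed
  qed
  obtain Fe where ucFe: "uniformly_continuous_on (cball 0 1) Fe" and FFe: "\<And>x. x \<in> ball 0 1 \<Longrightarrow> F x = Fe x"
  proof -
    obtain g where "uniformly_continuous_on (closure (ball 0 1)) g" "\<And>x. x \<in> ball 0 1 \<Longrightarrow> F x = g x"
      using uniformly_continuous_on_extension_on_closure[OF ucF] by metis
    then show ?thesis using that[of g] closure_ball[of 1 "0::complex"] by simp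
  qed
  have contFe: "continuous_on (cball 0 1) Fe" using ucFe uniformly_continuous_imp_continuous by blast
  have limFe: "Lim (at z within ball 0 1) F = Fe z" if "z \<in> cball 0 1" for z
  proof -
    have "(Fe \<longlongrightarrow> Fe z) (at z within cball 0 1)"
      using contFe that continuous_on_def by blast
    then have "(Fe \<longlongrightarrow> Fe z) (at z within ball 0 1)"
      by (rule tendsto_within_subset) auto
    then have "(F \<longlongrightarrow> Fe z) (at z within ball 0 1)"
    proof (rule tendsto_cong[THEN iffD1, rotated])
      show "\<forall>\<^sub>F w in at z within ball 0 1. Fe w = F w"
        unfolding eventually_at_filter by (rule always_eventually) (auto simp: FFe)
    qed
    moreover have "at z within ball 0 1 \<noteq> bot"
      using that by (simp add: trivial_limit_within islimpt_ball)
    ultimately show ?thesis by (simp add: tendsto_Lim)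
  qed
  have gam: "(\<lambda>\<theta>. Lim (at (cis \<theta>) within ball 0 1) F) = (\<lambda>\<theta>. Fe (cis \<theta>))"
    using limFe by auto
  define r where "r = (\<lambda>n::nat. 1 - 1 / (real n + 2))"
  have r1: "r \<longlonglongrightarrow> 1" unfolding r_def by real_asymp
  have r0: "0 < r n" and r1': "r n < 1" for n unfolding r_def by (auto simp: field_simps)
  define D2 where "D2 = (\<lambda>\<theta>. \<i> * cis \<theta> * G (cis \<theta>))"
  have fconv: "(\<lambda>n. F (of_real (r n) * cis \<theta>)) \<longlonglongrightarrow> Fe (cis \<theta>)" for \<theta>
  proof -
    have "(\<lambda>n. of_real (r n) * cis \<theta>) \<longlonglongrightarrow> cis \<theta>"
      using tendsto_mult[OF tendsto_of_real[OF r1] tendsto_const, of "cis \<theta>"] by simp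
    then have "(\<lambda>n. Fe (of_real (r n) * cis \<theta>)) \<longlonglongrightarrow> Fe (cis \<theta>)"
      by (rule continuous_on_tendsto_compose[OF contFe])
         (auto simp: norm_mult r0 r1' less_imp_le intro!: always_eventually)
    moreover have "F (of_real (r n) * cis \<theta>) = Fe (of_real (r n) * cis \<theta>)" for n
      using FFe[of "of_real (r n) * cis \<theta>"] r0[of n] r1'[of n] by (simp add: norm_mult)
    ultimately show ?thesis by simp
  qed
  have dfn: "((\<lambda>\<theta>. F (of_real (r n) * cis \<theta>)) has_derivative
      (\<lambda>h. h *\<^sub>R (of_real (r n) * (\<i> * cis \<theta>) * G (of_real (r n) * cis \<theta>)))) (at \<theta> within UNIV)" for n \<theta>
  proof -
    have "(cis has_vector_derivative (\<i> * cis \<theta>)) (at \<theta>)"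
      using has_derivative_cis[OF has_derivative_ident, of \<theta> UNIV] by (simp add: has_vector_derivative_def)
    then have "((\<lambda>\<theta>. of_real (r n) * cis \<theta>) has_vector_derivative (of_real (r n) * (\<i> * cis \<theta>))) (at \<theta>)"
      by (rule has_vector_derivative_mult_right)
    moreover have "(F has_field_derivative G (of_real (r n) * cis \<theta>)) (at (of_real (r n) * cis \<theta>))"
      using dF r0[of n] r1'[of n] by (simp add: norm_mult)
    ultimately have "((F \<circ> (\<lambda>\<theta>. of_real (r n) * cis \<theta>)) has_vector_derivative
        (of_real (r n) * (\<i> * cis \<theta>) * G (of_real (r n) * cis \<theta>))) (at \<theta>)"
      by (rule field_vector_diff_chain_at)
    then show ?thesis by (simp add: has_vector_derivative_def o_def)
  qed
  have unif: "\<forall>\<^sub>F n in sequentially. \<forall>\<theta>\<in>UNIV. \<forall>h. norm (h *\<^sub>R (of_real (r n) * (\<i> * cis \<theta>) * G (of_real (r n) * cis \<theta>)) - h *\<^sub>R D2 \<theta>) \<le> e * norm h"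
    if e: "e > 0" for e
  proof -
    obtain d where d: "d > 0" and dG: "\<And>x x'. x \<in> cball 0 1 \<Longrightarrow> x' \<in> cball 0 1 \<Longrightarrow> dist x' x < d \<Longrightarrow> dist (G x') (G x) < e/2"
      using compact_uniformly_continuous[OF contG compact_cball] e unfolding uniformly_continuous_on_def
      by (metis half_gt_zero)
    have "(\<lambda>n. 1 - r n) \<longlonglongrightarrow> 1 - 1" by (intro tendsto_intros r1)
    then have "\<forall>\<^sub>F n in sequentially. 1 - r n < min d (e / (2 * (M + 1)))"
      by (rule order_tendstoD(2)) (use d e M0 in simp)
    then show ?thesis
    proof (rule eventually_mono)
      fix n assume n: "1 - r n < min d (e / (2 * (M + 1)))"
      show "\<forall>\<theta>\<in>UNIV. \<forall>h. norm (h *\<^sub>R (of_real (r n) * (\<i> * cis \<theta>) * G (of_real (r n) * cis \<theta>)) - h *\<^sub>R D2 \<theta>) \<le> e * norm h"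
      proof (intro ballI allI)
        fix \<theta> h
        define w where "w = cis \<theta>"
        define a where "a = r n"
        have w1: "norm w = 1" unfolding w_def by simp
        have a01: "0 < a" "a < 1" unfolding a_def using r0 r1' by auto
        have na: "norm (complex_of_real a - 1) = 1 - a"
        proof -
          have "norm (complex_of_real a - 1) = \<bar>a - 1\<bar>" by (metis norm_of_real of_real_1 of_real_diff)
          then show ?thesis using a01 by simp
        qed
        have aw: "of_real a * w \<in> cball 0 1" "w \<in> cball 0 1" using w1 a01 by (auto simp: norm_mult)
        have "dist (of_real a * w) w = 1 - a"
        proof -
          have "of_real a * w - w = of_real (a - 1) * w" by (simp add: algebra_simps)
          moreover have "norm (complex_of_real a - 1) = \<bar>a - 1\<bar>" by (metis norm_of_real of_real_1 of_real_diff)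
          ultimately show ?thesis using w1 a01 by (simp add: dist_norm norm_mult)
        qed
        then have dd: "dist (G (of_real a * w)) (G w) < e/2" using dG[OF aw(2,1)] n a_def by simp
        have nb: "norm (G (of_real a * w)) \<le> M" using M aw by simp
        have "(1 - a) * norm (G (of_real a * w)) \<le> (1 - a) * M" using nb a01 by (simp add: mult_left_mono)
        also have "\<dots> \<le> e / (2 * (M + 1)) * M"
          by (rule mult_right_mono) (use n a_def M0 in auto)
        also have "\<dots> \<le> e / 2"
        proof -
          have "e / (2 * (M + 1)) * M = e / 2 * (M / (M + 1))" by (simp add: field_simps)
          also have "\<dots> \<le> e / 2 * 1" using M0 e by (intro mult_left_mono) auto
          finally show ?thesis by simp
        qed
        finally have t1: "(1 - a) * norm (G (of_real a * w)) \<le> e / 2" .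
        have eq: "of_real a * (\<i> * w) * G (of_real a * w) - D2 \<theta> =
            \<i> * w * (of_real (a - 1) * G (of_real a * w) + (G (of_real a * w) - G w))"
          unfolding D2_def w_def by (simp add: algebra_simps)
        have "norm (of_real a * (\<i> * w) * G (of_real a * w) - D2 \<theta>)
              = norm (of_real (a - 1) * G (of_real a * w) + (G (of_real a * w) - G w))"
          unfolding eq using w1 by (simp add: norm_mult)
        also have "\<dots> \<le> norm (of_real (a - 1) * G (of_real a * w)) + norm (G (of_real a * w) - G w)"
          by (rule norm_triangle_ineq)
        also have "\<dots> = (1 - a) * norm (G (of_real a * w)) + dist (G (of_real a * w)) (G w)"
          using a01 na by (simp add: norm_mult dist_norm)
        also have "\<dots> \<le> e" using t1 dd by simp
        finally have "norm (of_real a * (\<i> * w) * G (of_real a * w) - D2 \<theta>) \<le> e" .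
        then have "\<bar>h\<bar> * norm (of_real a * (\<i> * w) * G (of_real a * w) - D2 \<theta>) \<le> \<bar>h\<bar> * e"
          by (simp add: mult_left_mono)
        then show "norm (h *\<^sub>R (of_real (r n) * (\<i> * cis \<theta>) * G (of_real (r n) * cis \<theta>)) - h *\<^sub>R D2 \<theta>) \<le> e * norm h"
          unfolding a_def[symmetric] w_def[symmetric] by (simp add: scaleR_diff_right[symmetric] mult.commute)
      qed
    qed
  qed
  from has_derivative_sequence[OF convex_UNIV dfn unif UNIV_I fconv[of 0]]
  obtain g2 where g2a: "\<forall>x\<in>UNIV. (\<lambda>n. F (of_real (r n) * cis x)) \<longlonglongrightarrow> g2 x \<and>
      (g2 has_derivative (\<lambda>h. h *\<^sub>R D2 x)) (at x within UNIV)"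
    by blast
  have g2: "\<And>\<theta>. (\<lambda>n. F (of_real (r n) * cis \<theta>)) \<longlonglongrightarrow> g2 \<theta>"
     "\<And>\<theta>. (g2 has_derivative (\<lambda>h. h *\<^sub>R D2 \<theta>)) (at \<theta> within UNIV)"
    using g2a by auto
  have g2e: "g2 = (\<lambda>\<theta>. Fe (cis \<theta>))"
    using g2(1) fconv LIMSEQ_unique by blast
  have dFe: "((\<lambda>\<theta>. Fe (cis \<theta>)) has_vector_derivative D2 \<theta>) (at \<theta>)" for \<theta>
    using g2(2)[of \<theta>] unfolding g2e has_vector_derivative_def by simp
  define D1 where "D1 = (\<lambda>\<theta>. complex_of_real (dtheta ux uy (cis \<theta>)) + \<i> * complex_of_real (dtheta vx vy (cis \<theta>)))"
  have dcis: "(cis has_derivative (\<lambda>y. y *\<^sub>R (\<i> * cis \<theta>))) (at \<theta> within UNIV)" for \<theta>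
    using has_derivative_cis[OF has_derivative_ident, of \<theta> UNIV] by simp
  have cisb: "cis ` UNIV \<subseteq> cball 0 1" by auto
  have dUre: "((\<lambda>\<theta>. Re (U (cis \<theta>))) has_derivative (\<lambda>y. y * dtheta ux uy (cis \<theta>))) (at \<theta>)" for \<theta>
  proof -
    have "((\<lambda>\<theta>. Re (U (cis \<theta>))) has_derivative (\<lambda>y. ux (cis \<theta>) * Re (y *\<^sub>R (\<i> * cis \<theta>)) + uy (cis \<theta>) * Im (y *\<^sub>R (\<i> * cis \<theta>)))) (at \<theta> within UNIV)"
      by (rule has_derivative_in_compose2[OF du cisb UNIV_I dcis])
    moreover have "(\<lambda>y. ux (cis \<theta>) * Re (y *\<^sub>R (\<i> * cis \<theta>)) + uy (cis \<theta>) * Im (y *\<^sub>R (\<i> * cis \<theta>))) = (\<lambda>y. y * dtheta ux uy (cis \<theta>))"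
      by (auto simp: dtheta_def algebra_simps)
    ultimately show ?thesis by simp
  qed
  have dUim: "((\<lambda>\<theta>. Im (U (cis \<theta>))) has_derivative (\<lambda>y. y * dtheta vx vy (cis \<theta>))) (at \<theta>)" for \<theta>
  proof -
    have "((\<lambda>\<theta>. Im (U (cis \<theta>))) has_derivative (\<lambda>y. vx (cis \<theta>) * Re (y *\<^sub>R (\<i> * cis \<theta>)) + vy (cis \<theta>) * Im (y *\<^sub>R (\<i> * cis \<theta>)))) (at \<theta> within UNIV)"
      by (rule has_derivative_in_compose2[OF dv cisb UNIV_I dcis])
    moreover have "(\<lambda>y. vx (cis \<theta>) * Re (y *\<^sub>R (\<i> * cis \<theta>)) + vy (cis \<theta>) * Im (y *\<^sub>R (\<i> * cis \<theta>))) = (\<lambda>y. y * dtheta vx vy (cis \<theta>))"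
      by (auto simp: dtheta_def algebra_simps)
    ultimately show ?thesis by simp
  qed
  have dU: "((\<lambda>\<theta>. U (cis \<theta>)) has_vector_derivative D1 \<theta>) (at \<theta>)" for \<theta>
  proof -
    have "((\<lambda>\<theta>. complex_of_real (Re (U (cis \<theta>))) + \<i> * complex_of_real (Im (U (cis \<theta>)))) has_derivative
      (\<lambda>y. complex_of_real (y * dtheta ux uy (cis \<theta>)) + \<i> * complex_of_real (y * dtheta vx vy (cis \<theta>)))) (at \<theta>)"
      by (intro has_derivative_add has_derivative_mult_right has_derivative_of_real dUre dUim)
    moreover have "(\<lambda>\<theta>. complex_of_real (Re (U (cis \<theta>))) + \<i> * complex_of_real (Im (U (cis \<theta>)))) = (\<lambda>\<theta>. U (cis \<theta>))"
      by (auto simp: complex_eq_iff)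
    moreover have "(\<lambda>y. complex_of_real (y * dtheta ux uy (cis \<theta>)) + \<i> * complex_of_real (y * dtheta vx vy (cis \<theta>))) = (\<lambda>y. y *\<^sub>R D1 \<theta>)"
      by (auto simp: D1_def complex_eq_iff)
    ultimately show ?thesis unfolding has_vector_derivative_def by simp
  qed
  have ccis: "continuous_on UNIV (\<lambda>\<theta>. h (cis \<theta>))" if "continuous_on (cball 0 1) h" for h :: "complex \<Rightarrow> real"
    by (rule continuous_on_compose2[OF that]) (auto intro: continuous_intros)
  have contD1: "continuous_on UNIV D1"
    unfolding D1_def dtheta_def
    by (intro continuous_intros ccis cux cuy cvx cvy)
  have contD2: "continuous_on UNIV D2"
  proof -
    have "continuous_on UNIV (\<lambda>\<theta>. G (cis \<theta>))"
      by (rule continuous_on_compose2[OF contG]) (auto intro: continuous_intros)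
    then show ?thesis unfolding D2_def by (intro continuous_intros)
  qed
  have D2form: "D2 \<theta> = complex_of_real (dtheta ux uy (cis \<theta>)) + \<i> * complex_of_real (Re (cis \<theta>) * ux (cis \<theta>) + Im (cis \<theta>) * uy (cis \<theta>))" for \<theta>
    unfolding D2_def G_def dtheta_def by (simp add: complex_eq_iff algebra_simps)
  have key: "(Re (cis \<theta>) * ux (cis \<theta>) + Im (cis \<theta>) * uy (cis \<theta>)) * dtheta vx vy (cis \<theta>) > 0"
    if "dtheta ux uy (cis \<theta>) = 0" for \<theta>
  proof -
    have "(Re (cis \<theta>) * ux (cis \<theta>) + Im (cis \<theta>) * uy (cis \<theta>)) * dtheta vx vy (cis \<theta>)
        = ux (cis \<theta>) * vy (cis \<theta>) - uy (cis \<theta>) * vx (cis \<theta>)"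
      unfolding dtheta_def by (rule alg1) (use that cis_sq in \<open>auto simp: dtheta_def\<close>)
    then show ?thesis using det_pos by simp
  qed
  have D1nz: "D1 \<theta> \<noteq> 0" for \<theta>
  proof
    assume "D1 \<theta> = 0"
    then have "dtheta ux uy (cis \<theta>) = 0" "dtheta vx vy (cis \<theta>) = 0" unfolding D1_def by (auto simp: complex_eq_iff)
    then show False using key[of \<theta>] by simp
  qed
  have D2nz: "D2 \<theta> \<noteq> 0" for \<theta>
  proof
    assume "D2 \<theta> = 0"
    then have "G (cis \<theta>) = 0" unfolding D2_def by simp
    then have "ux (cis \<theta>) = 0" "uy (cis \<theta>) = 0" unfolding G_def by (auto simp: complex_eq_iff)
    then show False using det_pos[rule_format, of "cis \<theta>"] by simp
  qed
  have per: "cis (\<theta> + 2 * pi) = cis \<theta>" for \<theta> by (simp add: cis_mult[symmetric])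
  have vd1: "vector_derivative (\<lambda>\<theta>. U (cis \<theta>)) (at \<theta>) = D1 \<theta>" for \<theta>
    using dU vector_derivative_at by blast
  have vd2: "vector_derivative (\<lambda>\<theta>. Fe (cis \<theta>)) (at \<theta>) = D2 \<theta>" for \<theta>
    using dFe vector_derivative_at by blast
  have R1: "regular_closed_curve (\<lambda>\<theta>. U (cis \<theta>))"
    unfolding regular_closed_curve_def vd1 using per dU contD1 D1nz by simp
  have R2: "regular_closed_curve (\<lambda>\<theta>. Fe (cis \<theta>))"
    unfolding regular_closed_curve_def vd2 using per dFe contD2 D2nz by simp
  have W: "winding_number (\<lambda>t. D2 (2 * pi * t)) 0 = winding_number (\<lambda>t. D1 (2 * pi * t)) 0"
  proof (rule winding_number_homotopic_loops, rule homotopic_loops_linear)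
    show "path (\<lambda>t. D2 (2 * pi * t))" unfolding path_def
      by (rule continuous_on_compose2[OF contD2]) (auto intro: continuous_intros)
    show "path (\<lambda>t. D1 (2 * pi * t))" unfolding path_def
      by (rule continuous_on_compose2[OF contD1]) (auto intro: continuous_intros)
    have c2: "cis (2 * pi) = cis 0" by simp
    show "pathfinish (\<lambda>t. D2 (2 * pi * t)) = pathstart (\<lambda>t. D2 (2 * pi * t))"
      unfolding pathfinish_def pathstart_def D2_def using c2 by simp
    show "pathfinish (\<lambda>t. D1 (2 * pi * t)) = pathstart (\<lambda>t. D1 (2 * pi * t))"
      unfolding pathfinish_def pathstart_def D1_def using c2 by simp
    fix t :: real
    define \<theta> where "\<theta> = 2 * pi * t"
    show "closed_segment (D2 (2 * pi * t)) (D1 (2 * pi * t)) \<subseteq> - {0}"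
    proof
      fix x assume "x \<in> closed_segment (D2 (2 * pi * t)) (D1 (2 * pi * t))"
      then obtain s where s: "0 \<le> s" "s \<le> 1" "x = (1 - s) *\<^sub>R D2 \<theta> + s *\<^sub>R D1 \<theta>"
        unfolding in_segment \<theta>_def by blast
      show "x \<in> - {0}"
      proof
        assume "x \<in> {0}"
        then have x0: "x = 0" by simp
        have "Re x = (1 - s) * dtheta ux uy (cis \<theta>) + s * dtheta ux uy (cis \<theta>)"
          using s(3) unfolding D2form D1_def by simp
        then have a0: "dtheta ux uy (cis \<theta>) = 0" using x0 by (simp add: algebra_simps)
        have "Im x = (1 - s) * (Re (cis \<theta>) * ux (cis \<theta>) + Im (cis \<theta>) * uy (cis \<theta>)) + s * dtheta vx vy (cis \<theta>)"
          using s(3) unfolding D2form D1_def by simp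
        then have "(1 - s) * (Re (cis \<theta>) * ux (cis \<theta>) + Im (cis \<theta>) * uy (cis \<theta>)) + s * dtheta vx vy (cis \<theta>) = 0"
          using x0 by simp
        then show False using alg2[OF key[OF a0] s(1,2)] by simp
      qed
    qed
  qed
  show ?thesis
    unfolding F_def[symmetric] gam WN_def vd1 vd2 using R1 R2 W by simp
qed
end
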